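(* Let $(X,d)$ be a separable metric space admitting a weak convergence. Then for all $p\ge1$ the map $M_p:(\mathcal{P}_{p-1}(X),\tau_{\mathrm{w}}^{p-1})\to(\mathrm{K}(X),\vec d\,)$ is continuous.
   Context: A convergence $c$ on a set $X$ is a rule assigning at most one point of $X$ as the "limit" of each sequence in $X$, such that whenever a sequence has limit $x$, every subsequence also has limit $x$. A convergence $w$ on $X$ is a weak convergence for $(X,d)$ if: (W1) whenever $\sup_n d(x_n,y)<\infty$ for some $y$, some subsequence converges in $w$ to some point of $X$; (W2) whenever $x_n\to x$ in $w$, $d(x,y)\le\liminf_n d(x_n,y)$ for all $y\in X$; (W3) whenever $x_n\to x$ in $w$ and $d(x_n,y)\to d(x,y)$ for some $y\in X$, then $d(x_n,x)\to0$. $(X,d)$ admits a weak convergence if such a $w$ exists. $\mathcal{P}_{p-1}(X)$ is the set of Borel probability measures $\mu$ on $(X,d)$ with $\int d^{p-1}(x,y)\,d\mu(y)<\infty$ for some (equivalently all) $x$; $\tau_{\mathrm{w}}^{p-1}$ is the topology on it in which $\mu_n\to\mu$ iff $\int f\,d\mu_n\to\int f\,d\mu$ for all bounded continuous $f$ and $\int d^{p-1}(x,y)\,d\mu_n(y)\to\int d^{p-1}(x,y)\,d\mu(y)$ for all $x\in X$. $W_p(\mu,x,x'):=\int_X(d^p(x,y)-d^p(x',y))\,d\mu(y)$ and $M_p(\mu):=\{x: W_p(\mu,x,x')\le0\ \forall x'\}$. $\mathrm{K}(X)$ is the set of non-empty $d$-compact subsets of $X$; $\vec d(S,S'):=\max_{x\in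 S}\min_{x'\in S'}d(x,x')$; the topology $\vec d$ on $\mathrm{K}(X)$ is the one generated by the sets $\vec B_r(S):=\{S'\in\mathrm{K}(X):\vec d(S',S)<r\}$, $S\in\mathrm{K}(X)$, $r\ge0$. *)

theory Defs
  imports "HOL-Probability.Probability"
begin

definition is_convergence :: "((nat \<Rightarrow> 'a) \<Rightarrow> 'a \<Rightarrow> bool) \<Rightarrow> bool" where
  "is_convergence c \<longleftrightarrow>
     (\<forall>xs x y. c xs x \<and> c xs y \<longrightarrow> x = y) \<and>
     (\<forall>xs x r. c xs x \<and> strict_mono (r :: nat \<Rightarrow> nat) \<longrightarrow> c (xs \<circ> r) x)"

definition is_weak_convergence :: "((nat \<Rightarrow> 'a::metric_space) \<Rightarrow> 'a \<Rightarrow> bool) \<Rightarrow> bool" where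
  "is_weak_convergence w \<longleftrightarrow> is_convergence w \<and>
     \<comment> \<open>(W1)\<close>
     (\<forall>xs. (\<exists>y. bdd_above (range (\<lambda>n. dist (xs n) y))) \<longrightarrow>
            (\<exists>r x. strict_mono (r :: nat \<Rightarrow> nat) \<and> w (xs \<circ> r) x)) \<and>
     \<comment> \<open>(W2)\<close>
     (\<forall>xs x. w xs x \<longrightarrow>
            (\<forall>y. ereal (dist x y) \<le> liminf (\<lambda>n. ereal (dist (xs n) y)))) \<and>
     \<comment> \<open>(W3)\<close>
     (\<forall>xs x y. w xs x \<and> (\<lambda>n. dist (xs n) y) \<longlonglongrightarrow> dist x y \<longrightarrow>
            (\<lambda>n. dist (xs n) x) \<longlonglongrightarrow> 0)"

definition admits_weak_convergence :: "'a::metric_space itself \<Rightarrow> bool" where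
  "admits_weak_convergence TYPE('a) \<longleftrightarrow> (\<exists>w :: (nat \<Rightarrow> 'a) \<Rightarrow> 'a \<Rightarrow> bool. is_weak_convergence w)"

definition separable_space :: "'a::metric_space itself \<Rightarrow> bool" where
  "separable_space TYPE('a) \<longleftrightarrow> (\<exists>D :: 'a set. countable D \<and> closure D = UNIV)"

text \<open>Power of the distance with the convention d^0 = 1 (Isabelle's powr has 0 powr 0 = 0).\<close>
definition dpow :: "'a::metric_space \<Rightarrow> 'a \<Rightarrow> real \<Rightarrow> real" where
  "dpow x y q = (if q = 0 then 1 else dist x y powr q)"

definition Pmom :: "real \<Rightarrow> ('a::metric_space) measure set" where
  "Pmom q = {M. prob_space M \<and> sets M = sets borel \<and>
                 (\<exists>x. (\<integral>\<^sup>+ y. ennreal (dpow x y q) \<partial>M) < \<infinity>)}"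

definition conv_wq :: "real \<Rightarrow> (nat \<Rightarrow> ('a::metric_space) measure) \<Rightarrow> 'a measure \<Rightarrow> bool" where
  "conv_wq q Ms M \<longleftrightarrow>
     (\<forall>f :: 'a \<Rightarrow> real. continuous_on UNIV f \<and> bounded (range f) \<longrightarrow>
        (\<lambda>n. integral\<^sup>L (Ms n) f) \<longlonglongrightarrow> integral\<^sup>L M f) \<and>
     (\<forall>x. (\<lambda>n. \<integral>y. dpow x y q \<partial>(Ms n)) \<longlonglongrightarrow> (\<integral>y. dpow x y q \<partial>M))"

definition Wp :: "real \<Rightarrow> ('a::metric_space) measure \<Rightarrow> 'a \<Rightarrow> 'a \<Rightarrow> real" where
  "Wp p M x x' = (\<integral>y. dist x y powr p - dist x' y powr p \<partial>M)"

definition Mp :: "real \<Rightarrow> ('a::metric_space) measure \<Rightarrow> 'a set" where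
  "Mp p M = {x. \<forall>x'. Wp p M x x' \<le> 0}"

definition Kset :: "('a::metric_space) set set" where
  "Kset = {S. S \<noteq> {} \<and> compact S}"

definition dvec :: "('a::metric_space) set \<Rightarrow> 'a set \<Rightarrow> real" where
  "dvec S S' = (SUP x\<in>S. INF x'\<in>S'. dist x x')"

definition dvec_ball :: "real \<Rightarrow> ('a::metric_space) set \<Rightarrow> 'a set set" where
  "dvec_ball r S = {S' \<in> Kset. dvec S' S < r}"

definition dvec_topology :: "('a::metric_space) set topology" where
  "dvec_topology = topology_generated_by {dvec_ball r S | r S. S \<in> Kset \<and> r \<ge> 0}"

end

theory Submission imports Defs begin

lemma powr_tangent:
  fixes a b p :: real
  assumes "a \<ge> 0" "b \<ge> 0" "p \<ge> 1"
  shows "a powr p - b powr p \<ge> p * b powr (p - 1) * (a - b)"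
proof (cases "b = 0")
  case True
  then show ?thesis using assms by simp
next
  case False
  hence b: "b > 0" using assms by simp
  show ?thesis
  proof (cases "a = 0")
    case True
    have "b powr (p-1) * b = b powr p" using b by (simp add: powr_diff field_simps)
    hence "p * b powr (p - 1) * (a - b) = - p * b powr p" using True by (simp add: algebra_simps)
    moreover have "p * b powr p \<ge> b powr p" using assms mult_right_mono[of 1 p "b powr p"] by simp
    ultimately show ?thesis using True assms by (simp add: mult.assoc)
  next
    case False
    hence a: "a > 0" using assms by simp
    have "a powr p - b powr p \<ge> (p * b powr (p - 1)) * (a - b)"
      apply (rule convex_on_imp_above_tangent[where A="{0<..}"])
      using powr_convex[OF assms(3)] a b
      by (auto simp: interior_open intro!: has_field_derivative_at_within has_real_derivative_powr)
    then show ?thesis by simp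
  qed
qed

lemma powr_split1:
  fixes x p :: real
  assumes "x \<ge> 0" "p \<ge> 1"
  shows "x powr p = x * x powr (p - 1)"
proof (cases "x = 0")
  case True then show ?thesis using assms by simp
next
  case False then show ?thesis using assms by (simp add: powr_mult_base)
qed

lemma powr_superadd:
  fixes s t p :: real
  assumes "s \<ge> 0" "t \<ge> 0" "p \<ge> 1"
  shows "s powr p + t powr p \<le> (s + t) powr p"
proof -
  have "s powr p = s * s powr (p - 1)" using powr_split1 assms by simp
  also have "\<dots> \<le> s * (s + t) powr (p - 1)"
    using assms by (intro mult_left_mono powr_mono2) auto
  finally have 1: "s powr p \<le> s * (s + t) powr (p - 1)" .
  have "t powr p = t * t powr (p - 1)" using powr_split1 assms by simp
  also have "\<dots> \<le> t * (s + t) powr (p - 1)"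
    using assms by (intro mult_left_mono powr_mono2) auto
  finally have 2: "t powr p \<le> t * (s + t) powr (p - 1)" .
  have "(s + t) powr p = (s + t) * (s + t) powr (p - 1)" using powr_split1 assms by simp
  with 1 2 show ?thesis by (simp add: algebra_simps)
qed

lemma powr_diff_abs:
  fixes a b p :: real
  assumes "a \<ge> 0" "b \<ge> 0" "p \<ge> 1"
  shows "\<bar>a powr p - b powr p\<bar> \<le> p * \<bar>a - b\<bar> * (max a b) powr (p - 1)"
proof (cases "a \<ge> b")
  case True
  have t: "b powr p - a powr p \<ge> p * a powr (p - 1) * (b - a)" using powr_tangent assms by simp
  have "a powr p \<ge> b powr p" using True assms by (intro powr_mono2) auto
  then show ?thesis using True t by (simp add: max_def algebra_simps)
next
  case False
  have t: "a powr p - b powr p \<ge> p * b powr (p - 1) * (a - b)" using powr_tangent assms by simp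
  have "a powr p \<le> b powr p" using False assms by (intro powr_mono2) auto
  then show ?thesis using False t by (simp add: max_def algebra_simps)
qed

lemma powr_sum_le:
  fixes b r q :: real
  assumes "b \<ge> 0" "r \<ge> 0" "q \<ge> 0"
  shows "(b + r) powr q \<le> 2 powr q * (b powr q + r powr q)"
proof -
  have "(b + r) powr q \<le> (2 * max b r) powr q" using assms by (intro powr_mono2) auto
  also have "\<dots> = 2 powr q * (max b r) powr q" using assms by (simp add: powr_mult)
  also have "\<dots> \<le> 2 powr q * (b powr q + r powr q)"
    using assms by (intro mult_left_mono) (auto simp: max_def)
  finally show ?thesis .
qed

lemma powr_diff_growth:
  fixes a b p R :: real
  assumes "a \<ge> 0" "b \<ge> 0" "p \<ge> 1" "\<bar>a - b\<bar> \<le> R"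
  shows "\<bar>a powr p - b powr p\<bar> \<le> p * R * 2 powr (p - 1) * (R powr (p - 1) + b powr (p - 1))"
proof -
  have R: "R \<ge> 0" using assms by linarith
  have "\<bar>a powr p - b powr p\<bar> \<le> p * \<bar>a - b\<bar> * (max a b) powr (p - 1)"
    using powr_diff_abs assms by simp
  also have "\<dots> \<le> p * R * (b + R) powr (p - 1)"
    using assms R by (intro mult_mono powr_mono2) auto
  also have "\<dots> \<le> p * R * (2 powr (p - 1) * (b powr (p - 1) + R powr (p - 1)))"
    using assms R by (intro mult_left_mono powr_sum_le) auto
  finally show ?thesis by (simp add: algebra_simps)
qed


lemma dpow_nonneg: "dpow x y q \<ge> 0"
  by (simp add: dpow_def)

lemma dist_powr_le_dpow: "q \<ge> 0 \<Longrightarrow> dist x y powr q \<le> dpow x y q"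
  by (simp add: dpow_def)

lemma dpow_cont:
  assumes "q \<ge> 0"
  shows "continuous_on UNIV (\<lambda>y. dpow x y q)"
proof (cases "q = 0")
  case True then show ?thesis by (simp add: dpow_def)
next
  case False
  then have "continuous_on UNIV (\<lambda>y. dist x y powr q)"
    using assms by (intro continuous_on_powr') (auto intro!: continuous_intros)
  then show ?thesis using False by (simp add: dpow_def)
qed

lemma dpow_change:
  assumes "q \<ge> 0"
  shows "dpow o' y q \<le> 2 powr q * (dpow x y q + dist o' x powr q)"
proof (cases "q = 0")
  case True then show ?thesis by (simp add: dpow_def)
next
  case False
  have "dist o' y powr q \<le> (dist x y + dist o' x) powr q"
    using assms dist_triangle[of o' y x] by (intro powr_mono2) (auto simp: dist_commute)
  also have "\<dots> \<le> 2 powr q * (dist x y powr q + dist o' x powr q)"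
    using assms by (intro powr_sum_le) auto
  finally show ?thesis using False by (simp add: dpow_def)
qed

lemma Pmom_prob: "M \<in> Pmom q \<Longrightarrow> prob_space M"
  by (simp add: Pmom_def)

lemma Pmom_sets: "M \<in> Pmom q \<Longrightarrow> sets M = sets borel"
  by (simp add: Pmom_def)

lemma Pmom_meas:
  assumes "M \<in> Pmom q" "f \<in> borel_measurable borel"
  shows "f \<in> borel_measurable M"
  using measurable_cong_sets[OF Pmom_sets[OF assms(1)] refl] assms(2) by blast

lemma Pmom_cont_meas:
  assumes "M \<in> Pmom q" "continuous_on UNIV f"
  shows "f \<in> borel_measurable M"
  using Pmom_meas[OF assms(1) borel_measurable_continuous_onI[OF assms(2)]] .

lemma Pmom_int_const: "M \<in> Pmom q \<Longrightarrow> integrable M (\<lambda>x. c::real)"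
  using Pmom_prob prob_space.finite_measure finite_measure.integrable_const by blast

lemma Pmom_int_dpow:
  assumes "M \<in> Pmom q" "q \<ge> 0"
  shows "integrable M (\<lambda>y. dpow o' y q)"
proof -
  obtain x where x: "(\<integral>\<^sup>+ y. ennreal (dpow x y q) \<partial>M) < \<infinity>"
    using assms(1) by (auto simp: Pmom_def)
  have mx: "(\<lambda>y. dpow x y q) \<in> borel_measurable M"
    using Pmom_cont_meas[OF assms(1) dpow_cont[OF assms(2)]] .
  have ix: "integrable M (\<lambda>y. dpow x y q)"
    using x mx by (intro integrableI_bounded) (auto simp: dpow_nonneg)
  have ib: "integrable M (\<lambda>y. 2 powr q * (dpow x y q + dist o' x powr q))"
    using ix Pmom_int_const[OF assms(1)] by (intro integrable_mult_right integrable_add) auto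
  show ?thesis
  proof (rule Bochner_Integration.integrable_bound[OF ib])
    show "(\<lambda>y. dpow o' y q) \<in> borel_measurable M"
      using Pmom_cont_meas[OF assms(1) dpow_cont[OF assms(2)]] .
    show "AE y in M. norm (dpow o' y q) \<le> norm (2 powr q * (dpow x y q + dist o' x powr q))"
      using dpow_change[OF assms(2), of o'] dpow_nonneg
      by (intro AE_I2) (auto simp: abs_of_nonneg dpow_nonneg add_nonneg_nonneg)
  qed
qed

lemma Pmom_int_bound:
  assumes "M \<in> Pmom q" "q \<ge> 0" "f \<in> borel_measurable M"
    and "\<And>y. \<bar>f y\<bar> \<le> A + B * dpow o' y q"
  shows "integrable M f"
proof (rule Bochner_Integration.integrable_bound)
  show "integrable M (\<lambda>y. A + B * dpow o' y q)"
    by (rule Bochner_Integration.integrable_add[OF Pmom_int_const[OF assms(1)] integrable_mult_right[OF Pmom_int_dpow[OF assms(1,2)]]])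
  show "f \<in> borel_measurable M" by fact
  show "AE y in M. norm (f y) \<le> norm (A + B * dpow o' y q)"
    using assms(4) by (intro AE_I2) (auto intro: order_trans[OF _ abs_ge_self])
qed


lemma dist_powr_growth:
  fixes p R a :: real
  assumes "p \<ge> 1" "a \<ge> 0" "\<bar>a - dist z y\<bar> \<le> R"
  shows "\<bar>a powr p - dist z y powr p\<bar> \<le>
    p * R * 2 powr (p - 1) * R powr (p - 1) + p * R * 2 powr (p - 1) * dpow z y (p - 1)"
proof -
  have R: "R \<ge> 0" using assms by linarith
  have "\<bar>a powr p - dist z y powr p\<bar> \<le> p * R * 2 powr (p - 1) * (R powr (p - 1) + dist z y powr (p - 1))"
    using powr_diff_growth[OF assms(2) zero_le_dist assms(1,3)] .
  also have "\<dots> \<le> p * R * 2 powr (p - 1) * (R powr (p - 1) + dpow z y (p - 1))"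
    using assms R by (intro mult_left_mono add_left_mono dist_powr_le_dpow) auto
  finally show ?thesis by (simp add: algebra_simps)
qed

lemma Wp_integrable:
  assumes "p \<ge> 1" "M \<in> Pmom (p - 1)"
  shows "integrable M (\<lambda>y. dist x y powr p - dist z y powr p)"
proof (rule Pmom_int_bound[OF assms(2)])
  show "0 \<le> p - 1" using assms by simp
  show "(\<lambda>y. dist x y powr p - dist z y powr p) \<in> borel_measurable M"
    using assms by (intro Pmom_cont_meas[OF assms(2)] continuous_intros continuous_on_powr') auto
  fix y
  have "\<bar>dist x y - dist z y\<bar> \<le> dist x z"
    using dist_triangle[of x y z] dist_triangle[of z y x] by (auto simp: dist_commute)
  then show "\<bar>dist x y powr p - dist z y powr p\<bar> \<le>
    p * dist x z * 2 powr (p - 1) * dist x z powr (p - 1) + p * dist x z * 2 powr (p - 1) * dpow z y (p - 1)"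
    using dist_powr_growth[OF assms(1) zero_le_dist] by blast
qed

lemma Wp_diff:
  assumes "p \<ge> 1" "M \<in> Pmom (p - 1)"
  shows "Wp p M x z = Wp p M x o' - Wp p M z o'"
  unfolding Wp_def
  by (subst Bochner_Integration.integral_diff[symmetric])
     (auto intro!: Wp_integrable[OF assms] Bochner_Integration.integral_cong)

lemma conv_wq_subseq:
  assumes "conv_wq q Ms M" "strict_mono r"
  shows "conv_wq q (Ms \<circ> r) M"
proof -
  have *: "(\<lambda>n. X (r n)) \<longlonglongrightarrow> L" if "X \<longlonglongrightarrow> L" for X :: "nat \<Rightarrow> real" and L
    using LIMSEQ_subseq_LIMSEQ[OF that assms(2)] by (simp add: comp_def)
  show ?thesis using assms(1) unfolding conv_wq_def by (auto intro: *)
qed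

lemma conv_wq_const: "conv_wq q (\<lambda>n. M) M"
  unfolding conv_wq_def by simp


lemma bc_conv:
  fixes f :: "'a::metric_space \<Rightarrow> real"
  assumes "conv_wq q Ms M" "continuous_on UNIV f" "\<And>y. \<bar>f y\<bar> \<le> B"
  shows "(\<lambda>n. \<integral>y. f y \<partial>Ms n) \<longlonglongrightarrow> (\<integral>y. f y \<partial>M)"
proof -
  have "bounded (range f)"
  proof -
    have "\<forall>x\<in>range f. norm x \<le> B" using assms(3) by auto
    then show ?thesis unfolding bounded_iff by blast
  qed
  then show ?thesis using assms(1,2) unfolding conv_wq_def by auto
qed

lemma weak_conv_growth:
  fixes g :: "'a::metric_space \<Rightarrow> real"
  assumes q: "q \<ge> 0" and Ms: "\<And>n. Ms n \<in> Pmom q" and M: "M \<in> Pmom q" and conv: "conv_wq q Ms M"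
    and gc: "continuous_on UNIV g" and gb: "\<And>y. \<bar>g y\<bar> \<le> Ca + Cb * dpow o' y q"
    and Ca: "Ca \<ge> 0" and Cb: "Cb \<ge> 0"
  shows "(\<lambda>n. \<integral>y. g y \<partial>Ms n) \<longlonglongrightarrow> (\<integral>y. g y \<partial>M)"
proof -
  define h where "h y = dpow o' y q" for y
  define T where "T K y = max (-(Ca + Cb * K)) (min (Ca + Cb * K) (g y))" for K y
  define m where "m K y = min (h y) K" for K y
  have hc: "continuous_on UNIV h" unfolding h_def using dpow_cont[OF q] .
  have h0: "h y \<ge> 0" for y unfolding h_def by (rule dpow_nonneg)
  have Tc: "continuous_on UNIV (T K)" for K unfolding T_def using gc by (intro continuous_intros)
  have mc: "continuous_on UNIV (m K)" for K unfolding m_def using hc by (intro continuous_intros)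
  have Tb: "\<bar>T K y\<bar> \<le> \<bar>Ca + Cb * K\<bar>" for K y unfolding T_def by auto
  have mb: "\<bar>m K y\<bar> \<le> \<bar>K\<bar>" if "K \<ge> 0" for K y unfolding m_def using h0[of y] that by auto
  have gT: "\<bar>g y - T K y\<bar> \<le> Cb * (h y - m K y)" if K: "K \<ge> 0" for K y
  proof (cases "\<bar>g y\<bar> \<le> Ca + Cb * K")
    case True
    then have "T K y = g y" unfolding T_def by auto
    then show ?thesis using Cb h0[of y] by (simp add: m_def)
  next
    case False
    then have "Cb * K < Cb * h y" using gb[of y] unfolding h_def by linarith
    then have "K < h y" using Cb by (metis mult_left_mono not_less)
    then have mK: "m K y = K" unfolding m_def by simp
    have "0 \<le> Ca + Cb * K" using Ca Cb K by simp
    have "\<bar>g y - T K y\<bar> = \<bar>g y\<bar> - (Ca + Cb * K)" using False \<open>0 \<le> Ca + Cb * K\<close> unfolding T_def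
      by (auto simp: max_def min_def abs_if split: if_splits)
    also have "\<dots> \<le> Cb * (h y - K)" using gb[of y] unfolding h_def by (simp add: algebra_simps)
    finally show ?thesis using mK by simp
  qed
  have intg: "integrable N g" if "N \<in> Pmom q" for N
    using Pmom_int_bound[OF that q Pmom_cont_meas[OF that gc] gb] .
  have intT: "integrable N (T K)" if "N \<in> Pmom q" for N K
    using Pmom_int_bound[where A="\<bar>Ca + Cb * K\<bar>" and B=0 and o'=o', OF that q Pmom_cont_meas[OF that Tc]] Tb by simp
  have inth: "integrable N h" if "N \<in> Pmom q" for N
    unfolding h_def using Pmom_int_dpow[OF that q] .
  have intm: "integrable N (m K)" if "N \<in> Pmom q" "K \<ge> 0" for N K
    using Pmom_int_bound[where A="\<bar>K\<bar>" and B=0 and o'=o', OF that(1) q Pmom_cont_meas[OF that(1) mc]] mb[OF that(2)] by simp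
  have approx: "\<bar>(\<integral>y. g y \<partial>N) - (\<integral>y. T K y \<partial>N)\<bar> \<le> Cb * ((\<integral>y. h y \<partial>N) - (\<integral>y. m K y \<partial>N))"
    if N: "N \<in> Pmom q" and K: "K \<ge> 0" for N K
  proof -
    have "(\<integral>y. g y \<partial>N) - (\<integral>y. T K y \<partial>N) = (\<integral>y. g y - T K y \<partial>N)"
      using intg[OF N] intT[OF N] by simp
    also have "\<bar>\<dots>\<bar> \<le> (\<integral>y. Cb * (h y - m K y) \<partial>N)"
    proof -
      have ii: "integrable N (\<lambda>y. g y - T K y)" "integrable N (\<lambda>y. Cb * (h y - m K y))"
        using intg[OF N] intT[OF N] inth[OF N] intm[OF N K] by auto
      have i1: "(\<integral>y. g y - T K y \<partial>N) \<le> (\<integral>y. Cb * (h y - m K y) \<partial>N)"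
        using ii gT[OF K] by (intro integral_mono) (auto simp: abs_le_iff)
      have pw: "- (Cb * (h y - m K y)) \<le> g y - T K y" for y
        using gT[OF K, of y] by arith
      have i2: "(\<integral>y. - (Cb * (h y - m K y)) \<partial>N) \<le> (\<integral>y. g y - T K y \<partial>N)"
        using ii pw by (intro integral_mono) auto
      show ?thesis using i1 i2 by simp
    qed
    also have "\<dots> = Cb * ((\<integral>y. h y \<partial>N) - (\<integral>y. m K y \<partial>N))"
      using inth[OF N] intm[OF N K] by simp
    finally show ?thesis .
  qed
  have mlim: "(\<lambda>k. \<integral>y. m (real k) y \<partial>M) \<longlonglongrightarrow> (\<integral>y. h y \<partial>M)"
  proof (rule integral_dominated_convergence[where w=h])
    show "h \<in> borel_measurable M" using Pmom_cont_meas[OF M hc] .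
    show "m (real k) \<in> borel_measurable M" for k using Pmom_cont_meas[OF M mc] .
    show "integrable M h" using inth[OF M] .
    show "AE y in M. (\<lambda>k. m (real k) y) \<longlonglongrightarrow> h y"
    proof (intro AE_I2 tendsto_eventually)
      fix y
      obtain N where "h y \<le> real N" using real_arch_simple by blast
      then show "\<forall>\<^sub>F k in sequentially. m (real k) y = h y"
        unfolding m_def eventually_sequentially by (intro exI[of _ N]) auto
    qed
    show "AE y in M. norm (m (real k) y) \<le> h y" for k
      using h0 by (intro AE_I2) (auto simp: m_def)
  qed
  show ?thesis
    unfolding tendsto_iff
  proof (intro allI impI)
    fix e :: real assume e: "e > 0"
    have lim0: "(\<lambda>k. Cb * ((\<integral>y. h y \<partial>M) - (\<integral>y. m (real k) y \<partial>M))) \<longlonglongrightarrow> Cb * ((\<integral>y. h y \<partial>M) - (\<integral>y. h y \<partial>M))"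
      by (intro tendsto_intros mlim)
    have "\<forall>\<^sub>F k in sequentially. dist (Cb * ((\<integral>y. h y \<partial>M) - (\<integral>y. m (real k) y \<partial>M))) 0 < e / 4"
      using tendstoD[OF lim0, of "e/4"] e by simp
    then obtain k where k: "\<bar>Cb * ((\<integral>y. h y \<partial>M) - (\<integral>y. m (real k) y \<partial>M))\<bar> < e / 4"
      unfolding eventually_sequentially by auto
    define K where "K = real k"
    have K: "K \<ge> 0" unfolding K_def by simp
    have l1: "(\<lambda>n. \<integral>y. T K y \<partial>Ms n) \<longlonglongrightarrow> (\<integral>y. T K y \<partial>M)"
      by (rule bc_conv[OF conv Tc Tb])
    have l2: "(\<lambda>n. \<integral>y. m K y \<partial>Ms n) \<longlonglongrightarrow> (\<integral>y. m K y \<partial>M)"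
      by (rule bc_conv[OF conv mc mb[OF K]])
    have l3: "(\<lambda>n. \<integral>y. h y \<partial>Ms n) \<longlonglongrightarrow> (\<integral>y. h y \<partial>M)"
      using conv unfolding conv_wq_def h_def by auto
    have l4: "(\<lambda>n. Cb * ((\<integral>y. h y \<partial>Ms n) - (\<integral>y. m K y \<partial>Ms n))) \<longlonglongrightarrow> Cb * ((\<integral>y. h y \<partial>M) - (\<integral>y. m K y \<partial>M))"
      by (intro tendsto_intros l2 l3)
    have e1: "\<forall>\<^sub>F n in sequentially. dist (\<integral>y. T K y \<partial>Ms n) (\<integral>y. T K y \<partial>M) < e / 4"
      using tendstoD[OF l1, of "e/4"] e by simp
    have e2: "\<forall>\<^sub>F n in sequentially. dist (Cb * ((\<integral>y. h y \<partial>Ms n) - (\<integral>y. m K y \<partial>Ms n))) (Cb * ((\<integral>y. h y \<partial>M) - (\<integral>y. m K y \<partial>M))) < e / 4"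
      using tendstoD[OF l4, of "e/4"] e by simp
    show "\<forall>\<^sub>F n in sequentially. dist (\<integral>y. g y \<partial>Ms n) (\<integral>y. g y \<partial>M) < e"
      using e1 e2
    proof eventually_elim
      case (elim n)
      have a1: "\<bar>(\<integral>y. g y \<partial>Ms n) - (\<integral>y. T K y \<partial>Ms n)\<bar> \<le> Cb * ((\<integral>y. h y \<partial>Ms n) - (\<integral>y. m K y \<partial>Ms n))"
        using approx[OF Ms K] .
      have a2: "\<bar>(\<integral>y. g y \<partial>M) - (\<integral>y. T K y \<partial>M)\<bar> \<le> Cb * ((\<integral>y. h y \<partial>M) - (\<integral>y. m K y \<partial>M))"
        using approx[OF M K] .
      show ?case using a1 a2 elim k unfolding dist_real_def K_def by linarith
    qed
  qed
qed


lemma lower_pt: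
  assumes "p \<ge> 1"
  shows "dist x y powr p - dist o' y powr p \<ge> - (p * dist x o' * dpow o' y (p - 1))"
proof -
  have t: "dist x y powr p - dist o' y powr p \<ge> p * dist o' y powr (p - 1) * (dist x y - dist o' y)"
    using powr_tangent[OF zero_le_dist zero_le_dist assms] .
  have d: "dist x y - dist o' y \<ge> - dist x o'"
    using dist_triangle[of o' y x] by (simp add: dist_commute)
  have b0: "p * dist o' y powr (p - 1) \<ge> 0" using assms by simp
  have "p * dist o' y powr (p - 1) * (dist x y - dist o' y) \<ge> p * dist o' y powr (p - 1) * (- dist x o')"
    using mult_left_mono[OF d b0] .
  moreover have "p * dist o' y powr (p - 1) * dist x o' \<le> p * dpow o' y (p - 1) * dist x o'"
    using assms dist_powr_le_dpow[of "p - 1" o' y] by (intro mult_right_mono mult_left_mono) auto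
  ultimately show ?thesis using t by (simp add: algebra_simps)
qed

lemma near_pt:
  assumes "p \<ge> 1" "dist o' y \<le> \<rho>" "dist x o' \<ge> 2 * \<rho> + 1"
  shows "dist x y powr p - dist o' y powr p \<ge> dist x o' - 2 * \<rho>"
proof -
  define a where "a = dist x y"
  define b where "b = dist o' y"
  have ab: "a - b \<ge> dist x o' - 2 * \<rho>"
    using dist_triangle[of x o' y] assms(2) unfolding a_def b_def by (simp add: dist_commute)
  have b0: "b \<ge> 0" "a - b \<ge> 1" using ab assms unfolding b_def by auto
  have "b powr p + (a - b) powr p \<le> (b + (a - b)) powr p"
    using powr_superadd[of b "a - b" p] b0 assms by simp
  moreover have "(a - b) powr 1 \<le> (a - b) powr p"
    using b0 assms by (intro powr_mono) auto
  ultimately show ?thesis using ab b0 unfolding a_def[symmetric] b_def[symmetric] by simp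
qed

lemma comb_pt:
  assumes "p \<ge> 1" "dist x o' \<ge> 2 * (\<rho> + 1) + 1" "\<rho> \<ge> 0"
    and phi_def: "\<phi> = max 0 (min 1 (\<rho> + 1 - dist o' y))"
  shows "dist x y powr p - dist o' y powr p \<ge>
     \<phi> * (dist x o' - 2 * (\<rho> + 1)) - p * dist x o' * ((1 - \<phi>) * dpow o' y (p - 1))"
proof -
  define L where "L = dist x y powr p - dist o' y powr p"
  have L2: "L \<ge> - (p * dist x o' * dpow o' y (p - 1))" unfolding L_def using lower_pt[OF assms(1)] .
  have ph: "0 \<le> \<phi>" "\<phi> \<le> 1" unfolding phi_def by auto
  show ?thesis
  proof (cases "\<phi> = 0")
    case True then show ?thesis using L2 unfolding L_def by simp
  next
    case False
    then have "dist o' y \<le> \<rho> + 1" unfolding phi_def by (auto simp: max_def min_def split: if_splits)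
    then have L1: "L \<ge> dist x o' - 2 * (\<rho> + 1)" unfolding L_def using near_pt[OF assms(1), of o' y "\<rho> + 1" x] assms(2) by simp
    have "\<phi> * (dist x o' - 2 * (\<rho> + 1)) \<le> \<phi> * L" using mult_left_mono[OF L1 ph(1)] .
    moreover have "(1 - \<phi>) * (- (p * dist x o' * dpow o' y (p - 1))) \<le> (1 - \<phi>) * L"
      using mult_left_mono[OF L2] ph by simp
    ultimately show ?thesis unfolding L_def by (simp add: algebra_simps)
  qed
qed


lemma Wp_lower_comb:
  assumes p: "p \<ge> 1" and N: "N \<in> Pmom (p - 1)" and k: "\<rho> \<ge> 0"
    and r: "dist x o' \<ge> 2 * (\<rho> + 1) + 1"
  shows "Wp p N x o' \<ge> (dist x o' - 2 * (\<rho> + 1)) * (\<integral>y. max 0 (min 1 (\<rho> + 1 - dist o' y)) \<partial>N)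
     - p * dist x o' * (\<integral>y. (1 - max 0 (min 1 (\<rho> + 1 - dist o' y))) * dpow o' y (p - 1) \<partial>N)"
proof -
  define \<phi> where "\<phi> y = max 0 (min 1 (\<rho> + 1 - dist o' y))" for y
  have q: "p - 1 \<ge> 0" using p by simp
  have phc: "continuous_on UNIV \<phi>" unfolding \<phi>_def by (intro continuous_intros)
  have ph: "0 \<le> \<phi> y" "\<phi> y \<le> 1" for y unfolding \<phi>_def by auto
  have i1: "integrable N \<phi>"
    using Pmom_int_bound[where A=1 and B=0 and o'=o', OF N q Pmom_cont_meas[OF N phc]] ph by simp
  have c2: "continuous_on UNIV (\<lambda>y. (1 - \<phi> y) * dpow o' y (p - 1))"
    using phc dpow_cont[OF q] by (intro continuous_intros)
  have i2: "integrable N (\<lambda>y. (1 - \<phi> y) * dpow o' y (p - 1))"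
  proof (rule Pmom_int_bound[where A=0 and B=1 and o'=o', OF N q Pmom_cont_meas[OF N c2]])
    fix y
    show "\<bar>(1 - \<phi> y) * dpow o' y (p - 1)\<bar> \<le> 0 + 1 * dpow o' y (p - 1)"
      using ph[of y] dpow_nonneg[of o' y "p - 1"] by (simp add: abs_mult mult_left_le_one_le)
  qed
  have "(\<integral>y. \<phi> y * (dist x o' - 2 * (\<rho> + 1)) - p * dist x o' * ((1 - \<phi> y) * dpow o' y (p - 1)) \<partial>N)
      \<le> (\<integral>y. dist x y powr p - dist o' y powr p \<partial>N)"
  proof (rule integral_mono)
    show "integrable N (\<lambda>y. \<phi> y * (dist x o' - 2 * (\<rho> + 1)) - p * dist x o' * ((1 - \<phi> y) * dpow o' y (p - 1)))"
      using i1 i2 by auto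
    show "integrable N (\<lambda>y. dist x y powr p - dist o' y powr p)" using Wp_integrable[OF p N] .
    fix y show "\<phi> y * (dist x o' - 2 * (\<rho> + 1)) - p * dist x o' * ((1 - \<phi> y) * dpow o' y (p - 1))
      \<le> dist x y powr p - dist o' y powr p"
      using comb_pt[OF p r k] unfolding \<phi>_def by blast
  qed
  moreover have "(\<integral>y. \<phi> y * (dist x o' - 2 * (\<rho> + 1)) - p * dist x o' * ((1 - \<phi> y) * dpow o' y (p - 1)) \<partial>N)
     = (dist x o' - 2 * (\<rho> + 1)) * (\<integral>y. \<phi> y \<partial>N) - p * dist x o' * (\<integral>y. (1 - \<phi> y) * dpow o' y (p - 1) \<partial>N)"
    using i1 i2 by (simp add: mult.commute)
  ultimately show ?thesis unfolding Wp_def \<phi>_def by simp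
qed


lemma Pmom_int_one: "M \<in> Pmom q \<Longrightarrow> (\<integral>y. 1 \<partial>M) = (1::real)"
  using prob_space.prob_space[OF Pmom_prob] by simp

lemma coercive:
  assumes p: "p \<ge> 1" and Ms: "\<And>n. Ms n \<in> Pmom (p - 1)" and M: "M \<in> Pmom (p - 1)"
    and conv: "conv_wq (p - 1) Ms M"
  shows "\<exists>R N. \<forall>n\<ge>N. \<forall>x. R \<le> dist x o' \<longrightarrow> 1/2 \<le> Wp p (Ms n) x o'"
proof -
  have q: "p - 1 \<ge> 0" using p by simp
  define \<phi> where "\<phi> k y = max 0 (min 1 (real k + 1 - dist o' y))" for k :: nat and y
  define A where "A k \<nu> = (\<integral>y. \<phi> k y \<partial>\<nu>)" for k \<nu>
  define B where "B k \<nu> = (\<integral>y. (1 - \<phi> k y) * dpow o' y (p - 1) \<partial>\<nu>)" for k \<nu>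
  have phc: "continuous_on UNIV (\<phi> k)" for k unfolding \<phi>_def by (intro continuous_intros)
  have ph: "0 \<le> \<phi> k y" "\<phi> k y \<le> 1" for k y unfolding \<phi>_def by auto
  have c2: "continuous_on UNIV (\<lambda>y. (1 - \<phi> k y) * dpow o' y (p - 1))" for k
    using phc dpow_cont[OF q] by (intro continuous_intros)
  have b2: "\<bar>(1 - \<phi> k y) * dpow o' y (p - 1)\<bar> \<le> 0 + 1 * dpow o' y (p - 1)" for k y
    using ph[of k y] dpow_nonneg[of o' y "p - 1"] by (simp add: abs_mult mult_left_le_one_le)
  have evph: "\<forall>\<^sub>F k in sequentially. \<phi> k y = 1" for y
  proof -
    obtain N where "dist o' y \<le> real N" using real_arch_simple by blast
    then show ?thesis unfolding eventually_sequentially \<phi>_def by (intro exI[of _ N]) auto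
  qed
  have limA: "(\<lambda>k. A k M) \<longlonglongrightarrow> 1"
  proof -
    have "(\<lambda>k. A k M) \<longlonglongrightarrow> (\<integral>y. 1 \<partial>M)"
      unfolding A_def
    proof (rule integral_dominated_convergence[where w="\<lambda>y. 1"])
      show "(\<lambda>y. 1::real) \<in> borel_measurable M" by simp
      show "\<phi> k \<in> borel_measurable M" for k using Pmom_cont_meas[OF M phc] .
      show "integrable M (\<lambda>y. 1::real)" using Pmom_int_const[OF M] .
      show "AE y in M. (\<lambda>k. \<phi> k y) \<longlonglongrightarrow> 1"
        using evph by (intro AE_I2 tendsto_eventually) auto
      show "AE y in M. norm (\<phi> k y) \<le> 1" for k using ph by (intro AE_I2) auto
    qed
    then show ?thesis using Pmom_int_one[OF M] by simp
  qed
  have limB: "(\<lambda>k. p * B k M) \<longlonglongrightarrow> 0"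
  proof -
    have "(\<lambda>k. B k M) \<longlonglongrightarrow> (\<integral>y. 0 \<partial>M)"
      unfolding B_def
    proof (rule integral_dominated_convergence[where w="\<lambda>y. dpow o' y (p - 1)"])
      show "(\<lambda>y. 0::real) \<in> borel_measurable M" by simp
      show "(\<lambda>y. (1 - \<phi> k y) * dpow o' y (p - 1)) \<in> borel_measurable M" for k
        using Pmom_cont_meas[OF M c2] .
      show "integrable M (\<lambda>y. dpow o' y (p - 1))" using Pmom_int_dpow[OF M q] .
      show "AE y in M. (\<lambda>k. (1 - \<phi> k y) * dpow o' y (p - 1)) \<longlonglongrightarrow> 0"
      proof (intro AE_I2 tendsto_eventually)
        fix y show "\<forall>\<^sub>F k in sequentially. (1 - \<phi> k y) * dpow o' y (p - 1) = 0"
          using evph[of y] by eventually_elim simp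
      qed
      show "AE y in M. norm ((1 - \<phi> k y) * dpow o' y (p - 1)) \<le> dpow o' y (p - 1)" for k
        using b2 by (intro AE_I2) auto
    qed
    then have "(\<lambda>k. p * B k M) \<longlonglongrightarrow> p * 0" by (intro tendsto_intros) simp
    then show ?thesis by simp
  qed
  have "\<forall>\<^sub>F k in sequentially. 3/4 < A k M \<and> p * B k M < 1/4"
    using order_tendstoD(1)[OF limA, of "3/4"] order_tendstoD(2)[OF limB, of "1/4"]
    by (auto intro: eventually_conj)
  then obtain k where k: "3/4 < A k M" "p * B k M < 1/4"
    unfolding eventually_sequentially by auto
  have lA: "(\<lambda>n. A k (Ms n)) \<longlonglongrightarrow> A k M"
    unfolding A_def using ph[of k]
    by (intro weak_conv_growth[where Ca=1 and Cb=0 and o'=o', OF q Ms M conv phc]) auto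
  have lB: "(\<lambda>n. p * B k (Ms n)) \<longlonglongrightarrow> p * B k M"
    unfolding B_def
    by (intro tendsto_intros weak_conv_growth[where Ca=0 and Cb=1 and o'=o', OF q Ms M conv c2 b2]) auto
  have "\<forall>\<^sub>F n in sequentially. 3/4 < A k (Ms n) \<and> p * B k (Ms n) < 1/4"
    using order_tendstoD(1)[OF lA k(1)] order_tendstoD(2)[OF lB k(2)]
    by (auto intro: eventually_conj)
  then obtain N where N: "\<And>n. n \<ge> N \<Longrightarrow> 3/4 < A k (Ms n) \<and> p * B k (Ms n) < 1/4"
    unfolding eventually_sequentially by auto
  show ?thesis
  proof (intro exI[of _ "3 * (real k + 1) + 1"] exI[of _ N] allI impI)
    fix n x assume n: "N \<le> n" and r: "3 * (real k + 1) + 1 \<le> dist x o'"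
    define r where "r = dist x o'"
    have W: "Wp p (Ms n) x o' \<ge> (r - 2 * (real k + 1)) * A k (Ms n) - p * r * B k (Ms n)"
      using Wp_lower_comb[OF p Ms, of "real k" x o'] r unfolding r_def A_def B_def \<phi>_def by simp
    have r0: "r - 2 * (real k + 1) \<ge> 0" "r \<ge> 0" using r unfolding r_def by auto
    have "(r - 2 * (real k + 1)) * (3/4) \<le> (r - 2 * (real k + 1)) * A k (Ms n)"
      using mult_left_mono[OF less_imp_le[OF conjunct1[OF N[OF n]]] r0(1)] .
    moreover have "r * (p * B k (Ms n)) \<le> r * (1/4)"
      using mult_left_mono[OF less_imp_le[OF conjunct2[OF N[OF n]]] r0(2)] .
    ultimately show "1/2 \<le> Wp p (Ms n) x o'" using W r unfolding r_def by (simp add: algebra_simps)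
  qed
qed


lemma Wp_lower:
  assumes p: "p \<ge> 1" and M: "M \<in> Pmom (p - 1)"
  shows "Wp p M x o' \<ge> - (p * dist x o' * (\<integral>y. dpow o' y (p - 1) \<partial>M))"
proof -
  have q: "p - 1 \<ge> 0" using p by simp
  have "(\<integral>y. - (p * dist x o' * dpow o' y (p - 1)) \<partial>M) \<le> (\<integral>y. dist x y powr p - dist o' y powr p \<partial>M)"
    using lower_pt[OF p] Wp_integrable[OF p M] Pmom_int_dpow[OF M q]
    by (intro integral_mono) auto
  then show ?thesis unfolding Wp_def by simp
qed

lemma wc_sub:
  assumes "is_weak_convergence w" "w xs x" "strict_mono r"
  shows "w (xs \<circ> r) x"
proof -
  have "\<forall>xs x r. w xs x \<and> strict_mono (r :: nat \<Rightarrow> nat) \<longrightarrow> w (xs \<circ> r) x"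
    using assms(1) unfolding is_weak_convergence_def is_convergence_def by (elim conjE) assumption
  then show ?thesis using assms(2,3) by blast
qed

lemma wc_W1:
  assumes "is_weak_convergence w" "bdd_above (range (\<lambda>n. dist (xs n) y))"
  shows "\<exists>r x. strict_mono (r :: nat \<Rightarrow> nat) \<and> w (xs \<circ> r) x"
proof -
  have "\<forall>xs. (\<exists>y. bdd_above (range (\<lambda>n. dist (xs n) y))) \<longrightarrow>
            (\<exists>r x. strict_mono (r :: nat \<Rightarrow> nat) \<and> w (xs \<circ> r) x)"
    using assms(1) unfolding is_weak_convergence_def by (elim conjE) assumption
  then show ?thesis using assms(2) by blast
qed

lemma wc_W2:
  assumes "is_weak_convergence w" "w xs x"
  shows "ereal (dist x y) \<le> liminf (\<lambda>n. ereal (dist (xs n) y))"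
proof -
  have "\<forall>xs x. w xs x \<longrightarrow>
            (\<forall>y. ereal (dist x y) \<le> liminf (\<lambda>n. ereal (dist (xs n) y)))"
    using assms(1) unfolding is_weak_convergence_def by (elim conjE) assumption
  then show ?thesis using assms(2) by blast
qed

lemma wc_W3:
  assumes "is_weak_convergence w" "w xs x" "(\<lambda>n. dist (xs n) y) \<longlonglongrightarrow> dist x y"
  shows "(\<lambda>n. dist (xs n) x) \<longlonglongrightarrow> 0"
proof -
  have "\<forall>xs x y. w xs x \<and> (\<lambda>n. dist (xs n) y) \<longlonglongrightarrow> dist x y \<longrightarrow>
            (\<lambda>n. dist (xs n) x) \<longlonglongrightarrow> 0"
    using assms(1) unfolding is_weak_convergence_def by (elim conjE) assumption
  then show ?thesis using assms(2,3) by blast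
qed

lemma core:
  fixes xs :: "nat \<Rightarrow> 'a::metric_space"
  assumes p: "p \<ge> 1" and w: "is_weak_convergence w"
    and Ms: "\<And>n. Ms n \<in> Pmom (p - 1)" and M: "M \<in> Pmom (p - 1)" and conv: "conv_wq (p - 1) Ms M"
    and wx: "w xs x" and bd: "\<And>n. dist (xs n) z \<le> R"
    and le: "\<And>n. Wp p (Ms n) (xs n) z \<le> a n" and a: "a \<longlonglongrightarrow> A"
  shows "\<exists>G. (\<forall>y. dist x y \<le> G y) \<and> (\<forall>y. liminf (\<lambda>n. ereal (dist (xs n) y)) = ereal (G y)) \<and>
     integrable M (\<lambda>y. G y powr p - dist z y powr p) \<and> (\<integral>y. G y powr p - dist z y powr p \<partial>M) \<le> A"
proof -
  have q: "p - 1 \<ge> 0" using p by simp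
  have R0: "R \<ge> 0" using bd[of 0] zero_le_dist[of "xs 0" z] by linarith
  define g where "g N y = (INF n\<in>{N..}. dist (xs n) y)" for N y
  have bb: "bdd_below ((\<lambda>n. dist (xs n) y) ` {N..})" for N y
    by (rule bdd_belowI[of _ 0]) auto
  have gl: "g N y \<le> dist (xs n) y" if "N \<le> n" for N n y
    unfolding g_def using that by (intro cINF_lower bb) auto
  have gge: "g N y \<ge> max 0 (dist z y - R)" for N y
    unfolding g_def
  proof (intro cINF_greatest)
    fix n assume "n \<in> {N..}"
    have "dist z y \<le> dist z (xs n) + dist (xs n) y" by (rule dist_triangle)
    then show "max 0 (dist z y - R) \<le> dist (xs n) y" using bd[of n] by (simp add: dist_commute)
  qed auto
  have gle: "g N y \<le> dist z y + R" for N y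
  proof -
    have "dist (xs N) y \<le> dist (xs N) z + dist z y" by (rule dist_triangle)
    then show ?thesis using gl[where N=N and n=N and y=y] bd[of N] by simp
  qed
  have g0: "g N y \<ge> 0" for N y using gge[where N=N and y=y] by simp
  have gabs: "\<bar>g N y - dist z y\<bar> \<le> R" for N y using gge[where N=N and y=y] gle[where N=N and y=y] by auto
  have glip: "g N y \<le> g N y' + dist y y'" for N y y'
  proof -
    have "g N y - dist y y' \<le> g N y'"
      unfolding g_def[of N y']
    proof (intro cINF_greatest)
      fix n assume "n \<in> {N..}"
      then have "g N y \<le> dist (xs n) y" using gl by auto
      also have "\<dots> \<le> dist (xs n) y' + dist y y'" using dist_triangle[of "xs n" y y'] by (simp add: dist_commute)
      finally show "g N y - dist y y' \<le> dist (xs n) y'" by simp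
    qed auto
    then show ?thesis by simp
  qed
  have gc: "continuous_on UNIV (g N)" for N
    unfolding continuous_on_iff
  proof (intro ballI allI impI)
    fix y e assume e: "0 < (e::real)"
    show "\<exists>d>0. \<forall>y'\<in>UNIV. dist y' y < d \<longrightarrow> dist (g N y') (g N y) < e"
    proof (intro exI[of _ e] conjI ballI impI e)
      fix y' assume d: "dist y' y < e"
      have "g N y \<le> g N y' + dist y y'" "g N y' \<le> g N y + dist y' y" using glip by auto
      then show "dist (g N y') (g N y) < e" using d by (auto simp: dist_real_def dist_commute abs_less_iff)
    qed
  qed
  have gmono: "g N y \<le> g N' y" if "N \<le> N'" for N N' y
    unfolding g_def[of N' y] using that by (intro cINF_greatest gl) auto
  define G where "G y = (SUP N. g N y)" for y
  have gbdd: "bdd_above (range (\<lambda>N. g N y))" for y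
    by (rule bdd_aboveI[of _ "dist z y + R"]) (auto intro: gle)
  have glim: "(\<lambda>N. g N y) \<longlonglongrightarrow> G y" for y
    unfolding G_def by (intro LIMSEQ_incseq_SUP gbdd) (auto simp: incseq_def intro: gmono)
  have G0: "G y \<ge> 0" for y using LIMSEQ_le_const[OF glim] g0 by blast
  have Gabs: "\<bar>G y - dist z y\<bar> \<le> R" for y
  proof -
    have "(\<lambda>N. \<bar>g N y - dist z y\<bar>) \<longlonglongrightarrow> \<bar>G y - dist z y\<bar>" by (intro tendsto_intros glim)
    then show ?thesis using LIMSEQ_le_const2 gabs by blast
  qed
  have liminf_eq: "liminf (\<lambda>n. ereal (dist (xs n) y)) = ereal (G y)" for y
  proof -
    have e1: "(INF n\<in>{N..}. ereal (dist (xs n) y)) = ereal (g N y)" for N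
    proof -
      have "0 \<le> (INF n\<in>{N..}. ereal (dist (xs n) y))" by (intro INF_greatest) auto
      moreover have "(INF n\<in>{N..}. ereal (dist (xs n) y)) \<le> ereal (dist (xs N) y)" by (intro INF_lower) auto
      ultimately have "\<bar>INF n\<in>{N..}. ereal (dist (xs n) y)\<bar> \<noteq> \<infinity>"
        by (cases "INF n\<in>{N..}. ereal (dist (xs n) y)") auto
      then show ?thesis unfolding g_def by (simp add: ereal_INF)
    qed
    have e2: "(SUP N. ereal (g N y)) = ereal (G y)"
    proof -
      have "ereal (g 0 y) \<le> (SUP N. ereal (g N y))" by (intro SUP_upper) auto
      then have "0 \<le> (SUP N. ereal (g N y))" using g0[of 0 y] by (auto intro: order_trans[rotated])
      moreover have "(SUP N. ereal (g N y)) \<le> ereal (dist z y + R)" by (intro SUP_least) (auto intro: gle)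
      ultimately have "\<bar>SUP N. ereal (g N y)\<bar> \<noteq> \<infinity>"
        by (cases "SUP N. ereal (g N y)") auto
      then show ?thesis unfolding G_def by (simp add: ereal_SUP)
    qed
    show ?thesis unfolding liminf_SUP_INF e1 e2 ..
  qed
  have xG: "dist x y \<le> G y" for y
  proof -
    have "ereal (dist x y) \<le> liminf (\<lambda>n. ereal (dist (xs n) y))"
      using wc_W2[OF w wx] .
    then show ?thesis using liminf_eq by simp
  qed
  define Ca where "Ca = p * R * 2 powr (p - 1) * R powr (p - 1)"
  define Cb where "Cb = p * R * 2 powr (p - 1)"
  have Ca: "Ca \<ge> 0" and Cb: "Cb \<ge> 0" unfolding Ca_def Cb_def using p R0 by auto
  have gbound: "\<bar>g N y powr p - dist z y powr p\<bar> \<le> Ca + Cb * dpow z y (p - 1)" for N y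
    using dist_powr_growth[OF p g0 gabs] unfolding Ca_def Cb_def by simp
  have Gbound: "\<bar>G y powr p - dist z y powr p\<bar> \<le> Ca + Cb * dpow z y (p - 1)" for y
    using dist_powr_growth[OF p G0 Gabs] unfolding Ca_def Cb_def by simp
  have gpc: "continuous_on UNIV (\<lambda>y. g N y powr p - dist z y powr p)" for N
    using p gc[of N] g0 by (intro continuous_intros continuous_on_powr') auto
  have gmeas: "(\<lambda>y. g N y powr p - dist z y powr p) \<in> borel_measurable \<nu>" if "\<nu> \<in> Pmom (p - 1)" for N \<nu>
    using Pmom_cont_meas[OF that gpc] .
  have gint: "integrable \<nu> (\<lambda>y. g N y powr p - dist z y powr p)" if "\<nu> \<in> Pmom (p - 1)" for N \<nu>
    using Pmom_int_bound[OF that q gmeas[OF that] gbound] .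
  have Gpt: "(\<lambda>N. g N y powr p - dist z y powr p) \<longlonglongrightarrow> G y powr p - dist z y powr p" for y
    using p g0 by (intro tendsto_intros glim) auto
  have Gmeas: "(\<lambda>y. G y powr p - dist z y powr p) \<in> borel_measurable M"
    by (rule borel_measurable_LIMSEQ_real[OF Gpt gmeas[OF M]])
  have Gint: "integrable M (\<lambda>y. G y powr p - dist z y powr p)"
    using Pmom_int_bound[OF M q Gmeas Gbound] .
  have stepN: "(\<integral>y. g N y powr p - dist z y powr p \<partial>M) \<le> A" for N
  proof -
    have "(\<lambda>n. \<integral>y. g N y powr p - dist z y powr p \<partial>Ms n) \<longlonglongrightarrow> (\<integral>y. g N y powr p - dist z y powr p \<partial>M)"
      by (rule weak_conv_growth[OF q Ms M conv gpc gbound Ca Cb])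
    moreover have "(\<integral>y. g N y powr p - dist z y powr p \<partial>Ms n) \<le> a n" if "n \<ge> N" for n
    proof -
      have "(\<integral>y. g N y powr p - dist z y powr p \<partial>Ms n) \<le> (\<integral>y. dist (xs n) y powr p - dist z y powr p \<partial>Ms n)"
        using gint[OF Ms] Wp_integrable[OF p Ms] gl[OF that] g0 p
        by (intro integral_mono) (auto intro!: powr_mono2)
      also have "\<dots> \<le> a n" using le[of n] unfolding Wp_def .
      finally show ?thesis .
    qed
    ultimately show ?thesis using LIMSEQ_le[OF _ a] by blast
  qed
  have "(\<lambda>N. \<integral>y. g N y powr p - dist z y powr p \<partial>M) \<longlonglongrightarrow> (\<integral>y. G y powr p - dist z y powr p \<partial>M)"
  proof (rule integral_dominated_convergence[where w="\<lambda>y. Ca + Cb * dpow z y (p - 1)"])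
    show "(\<lambda>y. G y powr p - dist z y powr p) \<in> borel_measurable M" by (rule Gmeas)
    show "(\<lambda>y. g N y powr p - dist z y powr p) \<in> borel_measurable M" for N by (rule gmeas[OF M])
    show "integrable M (\<lambda>y. Ca + Cb * dpow z y (p - 1))"
      by (rule Bochner_Integration.integrable_add[OF Pmom_int_const[OF M] integrable_mult_right[OF Pmom_int_dpow[OF M q]]])
    show "AE y in M. (\<lambda>N. g N y powr p - dist z y powr p) \<longlonglongrightarrow> G y powr p - dist z y powr p"
      using Gpt by (intro AE_I2) auto
    show "AE y in M. norm (g N y powr p - dist z y powr p) \<le> Ca + Cb * dpow z y (p - 1)" for N
      using gbound by (intro AE_I2) auto
  qed
  then have "(\<integral>y. G y powr p - dist z y powr p \<partial>M) \<le> A"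
    using LIMSEQ_le_const2 stepN by blast
  then show ?thesis using xG liminf_eq Gint by blast
qed


lemma core_mem:
  fixes xs :: "nat \<Rightarrow> 'a::metric_space"
  assumes p: "p \<ge> 1" and w: "is_weak_convergence w"
    and Ms: "\<And>n. Ms n \<in> Pmom (p - 1)" and M: "M \<in> Pmom (p - 1)" and conv: "conv_wq (p - 1) Ms M"
    and wx: "w xs x" and bd: "\<And>n. dist (xs n) z \<le> R"
    and le: "\<And>n. Wp p (Ms n) (xs n) z \<le> a n" and a: "a \<longlonglongrightarrow> A"
  shows "Wp p M x z \<le> A"
proof -
  obtain G where G: "\<And>y. dist x y \<le> G y" "integrable M (\<lambda>y. G y powr p - dist z y powr p)"
    "(\<integral>y. G y powr p - dist z y powr p \<partial>M) \<le> A"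
    using core[OF p w Ms M conv wx bd le a] by blast
  have "Wp p M x z \<le> (\<integral>y. G y powr p - dist z y powr p \<partial>M)"
    unfolding Wp_def using Wp_integrable[OF p M] G(1,2) p
    by (intro integral_mono) (auto intro!: powr_mono2)
  then show ?thesis using G(3) by simp
qed

lemma core_strong:
  fixes xs :: "nat \<Rightarrow> 'a::metric_space"
  assumes p: "p \<ge> 1" and w: "is_weak_convergence w"
    and Ms: "\<And>n. Ms n \<in> Pmom (p - 1)" and M: "M \<in> Pmom (p - 1)" and conv: "conv_wq (p - 1) Ms M"
    and wx: "w xs x" and bd: "\<And>n. dist (xs n) x \<le> R"
    and le: "\<And>n. Wp p (Ms n) (xs n) x \<le> 0"
  shows "\<exists>r. strict_mono r \<and> (xs \<circ> r) \<longlonglongrightarrow> x"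
proof -
  obtain G where G: "\<And>y. dist x y \<le> G y" "\<And>y. liminf (\<lambda>n. ereal (dist (xs n) y)) = ereal (G y)"
    "integrable M (\<lambda>y. G y powr p - dist x y powr p)"
    "(\<integral>y. G y powr p - dist x y powr p \<partial>M) \<le> 0"
    using core[OF p w Ms M conv wx bd le tendsto_const[of 0]] by blast
  have nn: "0 \<le> G y powr p - dist x y powr p" for y
    using G(1)[of y] p by (auto intro!: powr_mono2)
  have "(\<integral>y. G y powr p - dist x y powr p \<partial>M) \<ge> 0"
    using nn by (intro integral_nonneg_AE AE_I2) auto
  then have "(\<integral>y. G y powr p - dist x y powr p \<partial>M) = 0" using G(4) by simp
  then have AE0: "AE y in M. G y powr p - dist x y powr p = 0"
    using integral_nonneg_eq_0_iff_AE[OF G(3)] nn by auto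
  have "\<exists>y. G y powr p - dist x y powr p = 0"
  proof (rule ccontr)
    assume nex: "\<not> (\<exists>y. G y powr p - dist x y powr p = 0)"
    have "AE y in M. False" using AE0 by eventually_elim (use nex in auto)
    then show False using prob_space.AE_False[OF Pmom_prob[OF M]] by simp
  qed
  then obtain y where y: "G y powr p = dist x y powr p" by auto
  have Gy: "G y = dist x y"
  proof (rule ccontr)
    assume "G y \<noteq> dist x y"
    then have "dist x y < G y" using G(1)[of y] by simp
    then have "dist x y powr p < G y powr p" using p by (intro powr_less_mono2) auto
    then show False using y by simp
  qed
  obtain r where r: "strict_mono r" "((\<lambda>n. ereal (dist (xs n) y)) \<circ> r) \<longlonglongrightarrow> liminf (\<lambda>n. ereal (dist (xs n) y))"
    using liminf_subseq_lim by blast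
  then have "(\<lambda>n. ereal (dist (xs (r n)) y)) \<longlonglongrightarrow> ereal (dist x y)"
    using G(2)[of y] Gy by (simp add: comp_def)
  then have lim: "(\<lambda>n. dist ((xs \<circ> r) n) y) \<longlonglongrightarrow> dist x y" by (simp add: comp_def)
  have wr: "w (xs \<circ> r) x"
    using wc_sub[OF w wx r(1)] .
  have "(\<lambda>n. dist ((xs \<circ> r) n) x) \<longlonglongrightarrow> 0"
    using wc_W3[OF w wr lim] .
  then have "(xs \<circ> r) \<longlonglongrightarrow> x" using tendsto_dist_iff by blast
  then show ?thesis using r(1) by blast
qed


lemma Mp_le: "x \<in> Mp p M \<Longrightarrow> Wp p M x x' \<le> 0"
  unfolding Mp_def by auto

lemma seq_lemma:
  fixes xs :: "nat \<Rightarrow> 'a::metric_space" and w :: "(nat \<Rightarrow> 'a) \<Rightarrow> 'a \<Rightarrow> bool"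
  assumes p: "p \<ge> 1" and w: "is_weak_convergence w"
    and Ms: "\<And>n. Ms n \<in> Pmom (p - 1)" and M: "M \<in> Pmom (p - 1)" and conv: "conv_wq (p - 1) Ms M"
    and mem: "\<And>n. xs n \<in> Mp p (Ms n)"
  shows "\<exists>r x. strict_mono r \<and> x \<in> Mp p M \<and> (xs \<circ> r) \<longlonglongrightarrow> x"
proof -
  define o' where "o' = xs 0"
  obtain R N where RN: "\<And>n x. n \<ge> N \<Longrightarrow> R \<le> dist x o' \<Longrightarrow> 1/2 \<le> Wp p (Ms n) x o'"
    using coercive[OF p Ms M conv, of o'] by blast
  have bdN: "dist (xs (n + N)) o' \<le> R" for n
  proof (rule ccontr)
    assume "\<not> ?thesis"
    then have "1/2 \<le> Wp p (Ms (n + N)) (xs (n + N)) o'" using RN[of "n + N"] by simp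
    then show False using Mp_le[OF mem[of "n + N"], of o'] by simp
  qed
  define ys where "ys k = xs (k + N)" for k
  define \<nu>s where "\<nu>s k = Ms (k + N)" for k
  have smN: "strict_mono (\<lambda>k::nat. k + N)" by (simp add: strict_mono_def)
  have conv\<nu>: "conv_wq (p - 1) \<nu>s M"
    using conv_wq_subseq[OF conv smN] unfolding \<nu>s_def comp_def by simp
  have "bdd_above (range (\<lambda>n. dist (ys n) o'))"
    unfolding ys_def by (rule bdd_aboveI[of _ R]) (auto intro: bdN)
  then obtain r1 x where r1: "strict_mono r1" "w (ys \<circ> r1) x"
    using wc_W1[OF w] by blast
  define zs where "zs = ys \<circ> r1"
  define \<eta>s where "\<eta>s = \<nu>s \<circ> r1"
  have conv\<eta>: "conv_wq (p - 1) \<eta>s M" unfolding \<eta>s_def by (rule conv_wq_subseq[OF conv\<nu> r1(1)])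
  have \<eta>P: "\<eta>s n \<in> Pmom (p - 1)" for n unfolding \<eta>s_def \<nu>s_def comp_def by (rule Ms)
  have wz: "w zs x" unfolding zs_def by (rule r1(2))
  have zle: "Wp p (\<eta>s n) (zs n) x' \<le> 0" for n x'
    unfolding zs_def \<eta>s_def ys_def \<nu>s_def comp_def by (rule Mp_le[OF mem])
  have zbd: "dist (zs n) x' \<le> R + dist o' x'" for n x'
  proof -
    have "dist (zs n) x' \<le> dist (zs n) o' + dist o' x'" by (rule dist_triangle)
    moreover have "dist (zs n) o' \<le> R" unfolding zs_def ys_def comp_def by (rule bdN)
    ultimately show ?thesis by simp
  qed
  have xM: "x \<in> Mp p M"
    unfolding Mp_def
  proof (intro CollectI allI)
    fix x'
    show "Wp p M x x' \<le> 0"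
      using core_mem[OF p w \<eta>P M conv\<eta> wz zbd zle tendsto_const[of 0]] .
  qed
  obtain r2 where r2: "strict_mono r2" "(zs \<circ> r2) \<longlonglongrightarrow> x"
    using core_strong[OF p w \<eta>P M conv\<eta> wz zbd zle] by blast
  have sm: "strict_mono (\<lambda>k. r1 (r2 k) + N)"
    using r1(1) r2(1) by (simp add: strict_mono_def)
  have "(xs \<circ> (\<lambda>k. r1 (r2 k) + N)) = zs \<circ> r2"
    unfolding zs_def ys_def comp_def by simp
  then show ?thesis using sm xM r2(2) by metis
qed

lemma Wp_self: "Wp p M x x = 0"
  unfolding Wp_def by simp

lemma Mp_nonempty:
  fixes M :: "'a::metric_space measure" and w :: "(nat \<Rightarrow> 'a) \<Rightarrow> 'a \<Rightarrow> bool"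
  assumes p: "p \<ge> 1" and w: "is_weak_convergence w" and M: "M \<in> Pmom (p - 1)"
  shows "Mp p M \<noteq> {}"
proof -
  define o' :: 'a where "o' = undefined"
  define F where "F x = Wp p M x o'" for x
  have q: "p - 1 \<ge> 0" using p by simp
  obtain R and N :: nat where RN: "\<And>n x. n \<ge> N \<Longrightarrow> R \<le> dist x o' \<Longrightarrow> 1/2 \<le> Wp p ((\<lambda>_. M) n) x o'"
    using coercive[OF p M M conv_wq_const, of o'] by blast
  have far: "1/2 \<le> F x" if "R \<le> dist x o'" for x using RN[OF order.refl that] unfolding F_def by simp
  define I where "I = (\<integral>y. dpow o' y (p - 1) \<partial>M)"
  have I0: "I \<ge> 0" unfolding I_def by (intro integral_nonneg_AE AE_I2) (simp add: dpow_nonneg)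
  have lowb: "F x \<ge> min (1/2) (- (p * \<bar>R\<bar> * I))" for x
  proof (cases "R \<le> dist x o'")
    case True then have "1/2 \<le> F x" by (rule far)
    then show ?thesis by simp
  next
    case False
    have "F x \<ge> - (p * dist x o' * I)" unfolding F_def I_def using Wp_lower[OF p M] .
    moreover have "p * dist x o' * I \<le> p * \<bar>R\<bar> * I"
      using False p I0 by (intro mult_right_mono mult_left_mono) auto
    ultimately show ?thesis by simp
  qed
  have bdd: "bdd_below (range F)" using lowb by (intro bdd_belowI[of _ "min (1/2) (- (p * \<bar>R\<bar> * I))"]) auto
  define m where "m = Inf (range F)"
  have mle: "m \<le> F z" for z unfolding m_def using bdd by (intro cInf_lower) auto
  have m0: "m \<le> 0" using mle[of o'] unfolding F_def by (simp add: Wp_self)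
  have "\<forall>n. \<exists>x. F x < m + inverse (real (Suc n)) / 3"
  proof
    fix n
    have "m < m + inverse (real (Suc n)) / 3" by simp
    then show "\<exists>x. F x < m + inverse (real (Suc n)) / 3"
      unfolding m_def using cInf_lessD[of "range F"] by blast
  qed
  then obtain xs where xs: "\<And>n. F (xs n) < m + inverse (real (Suc n)) / 3" by metis
  have xsb: "dist (xs n) o' \<le> R" for n
  proof (rule ccontr)
    assume "\<not> ?thesis"
    then have "1/2 \<le> F (xs n)" using far by simp
    moreover have "inverse (real (Suc n)) \<le> 1" by (simp add: inverse_le_1_iff)
    ultimately show False using xs[of n] m0 by linarith
  qed
  have "bdd_above (range (\<lambda>n. dist (xs n) o'))"
    by (rule bdd_aboveI[of _ R]) (auto intro: xsb)
  then obtain r1 x where r1: "strict_mono r1" "w (xs \<circ> r1) x"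
    using wc_W1[OF w] by blast
  have "Wp p M x z \<le> 0" for z
  proof -
    define a where "a n = m + inverse (real (Suc n)) / 3 - F z" for n
    have alim: "a \<longlonglongrightarrow> m + 0 / 3 - F z"
      unfolding a_def by (intro tendsto_intros LIMSEQ_inverse_real_of_nat) simp
    have ale: "Wp p ((\<lambda>_. M) n) ((xs \<circ> r1) n) z \<le> a n" for n
    proof -
      have "Wp p M (xs (r1 n)) z = F (xs (r1 n)) - F z" unfolding F_def using Wp_diff[OF p M] .
      moreover have iv: "inverse (real (Suc (r1 n))) \<le> inverse (real (Suc n))"
        using seq_suble[OF r1(1), of n] by (intro le_imp_inverse_le) auto
      moreover have "F (xs (r1 n)) < m + inverse (real (Suc (r1 n))) / 3" by (rule xs)
      ultimately show ?thesis unfolding a_def comp_def by linarith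
    qed
    have bd: "dist ((xs \<circ> r1) n) z \<le> R + dist o' z" for n
    proof -
      have "dist ((xs \<circ> r1) n) z \<le> dist ((xs \<circ> r1) n) o' + dist o' z" by (rule dist_triangle)
      then show ?thesis using xsb[of "r1 n"] by simp
    qed
    have "Wp p M x z \<le> m + 0 / 3 - F z"
      using core_mem[OF p w M M conv_wq_const r1(2) bd ale alim] .
    then show ?thesis using mle[of z] by simp
  qed
  then have "x \<in> Mp p M" unfolding Mp_def by auto
  then show ?thesis by auto
qed

lemma Mp_compact:
  fixes M :: "'a::metric_space measure" and w :: "(nat \<Rightarrow> 'a) \<Rightarrow> 'a \<Rightarrow> bool"
  assumes p: "p \<ge> 1" and w: "is_weak_convergence w" and M: "M \<in> Pmom (p - 1)"
  shows "compact (Mp p M)"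
  unfolding compact_eq_seq_compact_metric seq_compact_def
proof (intro allI impI)
  fix f :: "nat \<Rightarrow> 'a" assume f: "\<forall>n. f n \<in> Mp p M"
  show "\<exists>l\<in>Mp p M. \<exists>r::nat\<Rightarrow>nat. strict_mono r \<and> (f \<circ> r) \<longlonglongrightarrow> l"
    using seq_lemma[OF p w M M conv_wq_const, of f] f by blast
qed


lemma half_lt: "(d::real) < r \<Longrightarrow> d + (r - d) / 2 < r"
  by (simp add: field_simps)

lemma dvec_infdist: "S \<noteq> {} \<Longrightarrow> dvec A S = (SUP x\<in>A. infdist x S)"
  unfolding dvec_def infdist_def by simp

lemma dvec_self: "S \<noteq> {} \<Longrightarrow> dvec S S = 0"
proof -
  assume S: "S \<noteq> {}"
  have "(SUP x\<in>S. infdist x S) = (SUP x\<in>S. (0::real))" by (rule SUP_cong) auto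
  then show ?thesis using S by (simp add: dvec_infdist)
qed

lemma dvec_le:
  fixes A B S :: "'a::metric_space set"
  assumes A: "A \<noteq> {}" and B: "compact B" and S: "S \<noteq> {}"
    and close: "\<forall>x\<in>A. \<exists>b\<in>B. dist x b < e"
  shows "dvec A S \<le> dvec B S + e"
  unfolding dvec_infdist[OF S]
proof (rule cSUP_least[OF A])
  fix x assume "x \<in> A"
  then obtain b where b: "b \<in> B" "dist x b < e" using close by blast
  have "bounded ((\<lambda>x. infdist x S) ` B)"
    using B by (intro compact_imp_bounded compact_continuous_image continuous_intros)
  then have "bdd_above ((\<lambda>x. infdist x S) ` B)" by (rule bounded_imp_bdd_above)
  then have "infdist b S \<le> (SUP x\<in>B. infdist x S)" using b(1) by (intro cSUP_upper)
  moreover have "infdist x S \<le> infdist b S + dist x b" by (rule infdist_triangle)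
  ultimately show "infdist x S \<le> (SUP x\<in>B. infdist x S) + e" using b(2) by simp
qed

theorem corollary3p13:
  fixes p :: real
  assumes "separable_space TYPE('a::metric_space)"
    and "admits_weak_convergence TYPE('a)"
    and "p \<ge> 1"
  shows "(\<forall>M \<in> (Pmom (p - 1) :: 'a measure set). Mp p M \<in> Kset) \<and>
         (\<forall>Ms M. (\<forall>n. Ms n \<in> (Pmom (p - 1) :: 'a measure set)) \<and> M \<in> Pmom (p - 1) \<and>
                 conv_wq (p - 1) Ms M \<longrightarrow>
                 limitin dvec_topology (\<lambda>n. Mp p (Ms n)) (Mp p M) sequentially)"
proof -
  have p: "p \<ge> 1" by (rule assms(3))
  obtain w :: "(nat \<Rightarrow> 'a) \<Rightarrow> 'a \<Rightarrow> bool" where w: "is_weak_convergence w"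
    using assms(2) unfolding admits_weak_convergence_def by blast
  have K: "Mp p M \<in> Kset" if "M \<in> Pmom (p - 1)" for M :: "'a measure"
    using Mp_nonempty[OF p w that] Mp_compact[OF p w that] unfolding Kset_def by simp
  show ?thesis
  proof (intro conjI ballI allI impI)
    fix M :: "'a measure" assume "M \<in> Pmom (p - 1)"
    then show "Mp p M \<in> Kset" by (rule K)
  next
    fix Ms :: "nat \<Rightarrow> 'a measure" and M :: "'a measure"
    assume H: "(\<forall>n. Ms n \<in> Pmom (p - 1)) \<and> M \<in> Pmom (p - 1) \<and> conv_wq (p - 1) Ms M"
    then have Ms: "\<And>n. Ms n \<in> Pmom (p - 1)" and M: "M \<in> Pmom (p - 1)" and conv: "conv_wq (p - 1) Ms M"
      by auto
    have KC: "\<forall>\<^sub>F n in sequentially. \<forall>x\<in>Mp p (Ms n). \<exists>b\<in>Mp p M. dist x b < e" if e: "e > 0" for e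
    proof (rule ccontr)
      assume "\<not> ?thesis"
      then have "\<exists>\<^sub>F n in sequentially. \<not> (\<forall>x\<in>Mp p (Ms n). \<exists>b\<in>Mp p M. dist x b < e)"
        by (simp add: not_eventually)
      then have "infinite {n. \<not> (\<forall>x\<in>Mp p (Ms n). \<exists>b\<in>Mp p M. dist x b < e)}"
        unfolding cofinite_eq_sequentially[symmetric] frequently_cofinite .
      from infinite_enumerate[OF this] obtain r :: "nat \<Rightarrow> nat" where r: "strict_mono r"
        "\<forall>k. r k \<in> {n. \<not> (\<forall>x\<in>Mp p (Ms n). \<exists>b\<in>Mp p M. dist x b < e)}"
        by blast
      have "\<forall>k. \<exists>x. x \<in> Mp p (Ms (r k)) \<and> (\<forall>b\<in>Mp p M. \<not> dist x b < e)"
      proof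
        fix k
        have "\<not> (\<forall>x\<in>Mp p (Ms (r k)). \<exists>b\<in>Mp p M. dist x b < e)" using r(2) by simp
        then obtain x where "x \<in> Mp p (Ms (r k))" "\<forall>b\<in>Mp p M. \<not> dist x b < e" by auto
        then show "\<exists>x. x \<in> Mp p (Ms (r k)) \<and> (\<forall>b\<in>Mp p M. \<not> dist x b < e)" by blast
      qed
      then obtain xs where xs: "\<And>k. xs k \<in> Mp p (Ms (r k))" "\<And>k b. b \<in> Mp p M \<Longrightarrow> \<not> dist (xs k) b < e"
        by metis
      have MsP: "(Ms \<circ> r) k \<in> Pmom (p - 1)" for k using Ms by simp
      have mem: "xs k \<in> Mp p ((Ms \<circ> r) k)" for k using xs(1) by simp
      obtain r' x where r': "strict_mono r'" "x \<in> Mp p M" "(xs \<circ> r') \<longlonglongrightarrow> x"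
        using seq_lemma[OF p w MsP M conv_wq_subseq[OF conv r(1)] mem] by blast
      have "\<forall>\<^sub>F k in sequentially. dist ((xs \<circ> r') k) x < e" using tendstoD[OF r'(3) e] .
      then obtain k where "dist ((xs \<circ> r') k) x < e" unfolding eventually_sequentially by blast
      then show False using xs(2)[OF r'(2), of "r' k"] by simp
    qed
    define \<S> :: "'a set set set" where "\<S> = {dvec_ball r S |r S. S \<in> Kset \<and> r \<ge> 0}"
    have MK: "Mp p M \<in> Kset" by (rule K[OF M])
    have MnK: "Mp p (Ms n) \<in> Kset" for n by (rule K[OF Ms])
    have gen: "\<forall>\<^sub>F n in sequentially. Mp p (Ms n) \<in> U"
      if "generate_topology_on \<S> U" "Mp p M \<in> U" for U
      using that
    proof (induction U rule: generate_topology_on.induct)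
      case Empty then show ?case by simp
    next
      case (Int a b)
      then have "\<forall>\<^sub>F n in sequentially. Mp p (Ms n) \<in> a \<and> Mp p (Ms n) \<in> b"
        by (intro eventually_conj) auto
      then show ?case by simp
    next
      case (UN K)
      then obtain k where k: "k \<in> K" "Mp p M \<in> k" by auto
      then have "\<forall>\<^sub>F n in sequentially. Mp p (Ms n) \<in> k" using UN.IH by blast
      then show ?case by (rule eventually_mono) (use k in auto)
    next
      case (Basis s)
      then obtain r S where s: "s = dvec_ball r S" "S \<in> Kset" "r \<ge> 0" unfolding \<S>_def by auto
      have Sne: "S \<noteq> {}" using s(2) unfolding Kset_def by auto
      have lt: "dvec (Mp p M) S < r" using Basis.prems s(1) unfolding dvec_ball_def by auto
      define e where "e = (r - dvec (Mp p M) S) / 2"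
      have e: "e > 0" unfolding e_def using lt by simp
      have er: "dvec (Mp p M) S + e < r" unfolding e_def using half_lt[OF lt] .
      show ?case
        using KC[OF e]
      proof eventually_elim
        case (elim n)
        have "dvec (Mp p (Ms n)) S \<le> dvec (Mp p M) S + e"
          using MnK[of n] MK Sne elim unfolding Kset_def by (intro dvec_le) auto
        then have "dvec (Mp p (Ms n)) S < r" using er by (rule le_less_trans)
        then show ?case using MnK[of n] s(1) unfolding dvec_ball_def by simp
      qed
    qed
    have top: "Mp p M \<in> \<Union>\<S>"
    proof -
      have "Mp p M \<in> dvec_ball 1 (Mp p M)"
        using MK dvec_self[of "Mp p M"] unfolding dvec_ball_def Kset_def by simp
      moreover have "dvec_ball 1 (Mp p M) \<in> \<S>" unfolding \<S>_def
        using MK by (intro CollectI exI[of _ 1] exI[of _ "Mp p M"]) simp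
      ultimately show ?thesis by blast
    qed
    show "limitin dvec_topology (\<lambda>n. Mp p (Ms n)) (Mp p M) sequentially"
      unfolding limitin_def dvec_topology_def \<S>_def[symmetric] openin_topology_generated_by_iff
        topology_generated_by_topspace
    proof (intro conjI allI impI)
      show "Mp p M \<in> \<Union>\<S>" by (rule top)
    next
      fix U assume "generate_topology_on \<S> U \<and> Mp p M \<in> U"
      then show "\<forall>\<^sub>F n in sequentially. Mp p (Ms n) \<in> U" using gen by simp
    qed
  qed
qed

end
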